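(* Let $Q$ be the quiver with one vertex $e$ and one loop $a$, let $Z=\{a^m\}$ with $m\ge2$ such that the characteristic $p$ of $k$ divides $m$, and let $\Lambda=kQ/\langle Z\rangle$. The following are equivalent: (i) the Lie algebra $\operatorname{H}^1(\Lambda,\Lambda)$ is simple; (ii) $\operatorname{H}^1(\Lambda,\Lambda)$ is semisimple; (iii) $m=p$ and $p>2$; (iv) $\operatorname{H}^1(\Lambda,\Lambda)$ is isomorphic to the Witt Lie algebra $W(1,1):=\operatorname{Der}(k[X]/(X^p))$ and $p>2$.
   Context: $k$ is an algebraically closed field of characteristic $p>0$. $\operatorname{H}^1(\Lambda,\Lambda)=\operatorname{Der}_k(\Lambda)/\operatorname{Ad}_k(\Lambda)$ is the Lie algebra of derivations modulo inner derivations (commutator bracket). A Lie algebra is semisimple if its solvable radical is zero. *)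

theory Defs
  imports "HOL-Computational_Algebra.Polynomial"
begin

record ('k, 'a) lie_alg =
  lcarrier :: "'a set"
  lzero    :: 'a
  ladd     :: "'a \<Rightarrow> 'a \<Rightarrow> 'a"
  lsmult   :: "'k \<Rightarrow> 'a \<Rightarrow> 'a"
  lbr      :: "'a \<Rightarrow> 'a \<Rightarrow> 'a"

definition lsubspace :: "('k, 'a) lie_alg \<Rightarrow> 'a set \<Rightarrow> bool" where
  "lsubspace L S \<longleftrightarrow> S \<subseteq> lcarrier L \<and> lzero L \<in> S \<and>
     (\<forall>x\<in>S. \<forall>y\<in>S. ladd L x y \<in> S) \<and> (\<forall>c. \<forall>x\<in>S. lsmult L c x \<in> S)"

definition lspan :: "('k, 'a) lie_alg \<Rightarrow> 'a set \<Rightarrow> 'a set" where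
  "lspan L X = \<Inter> {S. lsubspace L S \<and> X \<subseteq> S}"

definition lideal :: "('k, 'a) lie_alg \<Rightarrow> 'a set \<Rightarrow> bool" where
  "lideal L I \<longleftrightarrow> lsubspace L I \<and> (\<forall>x\<in>lcarrier L. \<forall>y\<in>I. lbr L x y \<in> I)"

definition lderived :: "('k, 'a) lie_alg \<Rightarrow> 'a set \<Rightarrow> 'a set" where
  "lderived L I = lspan L {lbr L x y | x y. x \<in> I \<and> y \<in> I}"

definition lsolvable_ideal :: "('k, 'a) lie_alg \<Rightarrow> 'a set \<Rightarrow> bool" where
  "lsolvable_ideal L I \<longleftrightarrow> lideal L I \<and> (\<exists>n. (lderived L ^^ n) I = {lzero L})"

definition lradical :: "('k, 'a) lie_alg \<Rightarrow> 'a set" where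
  "lradical L = lspan L (\<Union> {I. lsolvable_ideal L I})"

definition lsemisimple :: "('k, 'a) lie_alg \<Rightarrow> bool" where
  "lsemisimple L \<longleftrightarrow> lradical L = {lzero L}"

definition lsimple :: "('k, 'a) lie_alg \<Rightarrow> bool" where
  "lsimple L \<longleftrightarrow> (\<exists>x\<in>lcarrier L. \<exists>y\<in>lcarrier L. lbr L x y \<noteq> lzero L) \<and>
     (\<forall>I. lideal L I \<longrightarrow> I = {lzero L} \<or> I = lcarrier L)"

definition lie_iso :: "('k, 'a) lie_alg \<Rightarrow> ('k, 'b) lie_alg \<Rightarrow> ('a \<Rightarrow> 'b) \<Rightarrow> bool" where
  "lie_iso L M f \<longleftrightarrow> bij_betw f (lcarrier L) (lcarrier M) \<and>
     (\<forall>x\<in>lcarrier L. \<forall>y\<in>lcarrier L. f (ladd L x y) = ladd M (f x) (f y)) \<and>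
     (\<forall>c. \<forall>x\<in>lcarrier L. f (lsmult L c x) = lsmult M c (f x)) \<and>
     (\<forall>x\<in>lcarrier L. \<forall>y\<in>lcarrier L. f (lbr L x y) = lbr M (f x) (f y))"

definition lie_isomorphic :: "('k, 'a) lie_alg \<Rightarrow> ('k, 'b) lie_alg \<Rightarrow> bool" where
  "lie_isomorphic L M \<longleftrightarrow> (\<exists>f. lie_iso L M f)"

definition lcoset :: "('k, 'a) lie_alg \<Rightarrow> 'a set \<Rightarrow> 'a \<Rightarrow> 'a set" where
  "lcoset L I x = {ladd L x i | i. i \<in> I}"

definition lquot :: "('k, 'a) lie_alg \<Rightarrow> 'a set \<Rightarrow> ('k, 'a set) lie_alg" where
  "lquot L I = \<lparr> lcarrier = lcoset L I ` lcarrier L,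
      lzero = lcoset L I (lzero L),
      ladd = (\<lambda>X Y. lcoset L I (ladd L (SOME x. x \<in> X) (SOME y. y \<in> Y))),
      lsmult = (\<lambda>c X. lcoset L I (lsmult L c (SOME x. x \<in> X))),
      lbr = (\<lambda>X Y. lcoset L I (lbr L (SOME x. x \<in> X) (SOME y. y \<in> Y))) \<rparr>"

section \<open>The truncated algebra k[a]/(a^m) = kQ/<a^m> (Q: one vertex, one loop a)\<close>

definition tcarrier :: "nat \<Rightarrow> 'k::field poly set" where
  "tcarrier m = {f. degree f < m}"

definition tmult :: "nat \<Rightarrow> 'k::field poly \<Rightarrow> 'k poly \<Rightarrow> 'k poly" where
  "tmult m f g = (f * g) mod (monom 1 m)"

definition der_set :: "nat \<Rightarrow> ('k::field poly \<Rightarrow> 'k poly) set" where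
  "der_set m = {D. (\<forall>f. f \<notin> tcarrier m \<longrightarrow> D f = 0) \<and>
      (\<forall>f\<in>tcarrier m. D f \<in> tcarrier m) \<and>
      (\<forall>f\<in>tcarrier m. \<forall>g\<in>tcarrier m. D (f + g) = D f + D g) \<and>
      (\<forall>c. \<forall>f\<in>tcarrier m. D (smult c f) = smult c (D f)) \<and>
      (\<forall>f\<in>tcarrier m. \<forall>g\<in>tcarrier m.
          D (tmult m f g) = tmult m f (D g) + tmult m (D f) g)}"

definition inner_ders :: "nat \<Rightarrow> ('k::field poly \<Rightarrow> 'k poly) set" where
  "inner_ders m = {(\<lambda>g. if g \<in> tcarrier m then tmult m f g - tmult m g f else 0) | f.
      f \<in> tcarrier m}"

definition Der_lie :: "nat \<Rightarrow> ('k::field, 'k poly \<Rightarrow> 'k poly) lie_alg" where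
  "Der_lie m = \<lparr> lcarrier = der_set m,
      lzero = (\<lambda>_. 0),
      ladd = (\<lambda>D E x. D x + E x),
      lsmult = (\<lambda>c D x. smult c (D x)),
      lbr = (\<lambda>D E x. D (E x) - E (D x)) \<rparr>"

definition HH1 :: "nat \<Rightarrow> ('k::field, ('k poly \<Rightarrow> 'k poly) set) lie_alg" where
  "HH1 m = lquot (Der_lie m) (inner_ders m)"

definition Witt11 :: "('k::field, 'k poly \<Rightarrow> 'k poly) lie_alg" where
  "Witt11 = Der_lie CHAR('k)"

end

theory Submission
  imports Defs
begin

abbreviation xm :: "nat \<Rightarrow> 'k::field poly" where "xm m \<equiv> monom 1 m"

lemma deg_mod_xm: "m > 0 \<Longrightarrow> degree (a mod xm m) < m"
  by (metis degree_0 degree_mod_less' degree_monom_eq monom_eq_0_iff one_neq_zero)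

lemma mod_in_T: "m > 0 \<Longrightarrow> a mod xm m \<in> tcarrier m"
  by (simp add: tcarrier_def deg_mod_xm)

lemma mod_T: "a \<in> tcarrier m \<Longrightarrow> a mod xm m = a"
  by (simp add: tcarrier_def mod_poly_less degree_monom_eq)

lemma pderiv_xm: "CHAR('k) dvd m \<Longrightarrow> pderiv (xm m :: 'k::field poly) = 0"
  by (simp add: pderiv_monom of_nat_eq_0_iff_char_dvd)

lemma pderiv_mod: assumes "CHAR('k) dvd m"
  shows "(pderiv (a mod xm m) * c) mod xm m = (pderiv a * c) mod (xm m :: 'k::field poly)"
proof -
  have a: "a = (a div xm m) * xm m + a mod xm m" by (rule div_mult_mod_eq[symmetric])
  have "pderiv a = pderiv (a div xm m) * xm m + pderiv (a mod xm m)"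
    by (subst a, simp add: pderiv_add pderiv_mult pderiv_xm[OF assms])
  hence "pderiv a * c = (pderiv (a div xm m) * c) * xm m + pderiv (a mod xm m) * c"
    by (simp add: algebra_simps)
  thus ?thesis by (simp add: mod_mult_self3)
qed

lemma T_add: "g \<in> tcarrier m \<Longrightarrow> h \<in> tcarrier m \<Longrightarrow> g + h \<in> tcarrier m"
proof -
  assume "g \<in> tcarrier m" "h \<in> tcarrier m"
  moreover have "degree (g + h) \<le> max (degree g) (degree h)" by (rule degree_add_le_max)
  ultimately show ?thesis by (simp add: tcarrier_def)
qed
lemma T_smult: "h \<in> tcarrier m \<Longrightarrow> smult c h \<in> tcarrier m"
proof -
  assume "h \<in> tcarrier m"
  moreover have "degree (smult c h) \<le> degree h" by (rule degree_smult_le)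
  ultimately show ?thesis by (simp add: tcarrier_def)
qed
lemma T_0: "m > 0 \<Longrightarrow> (0::'k::field poly) \<in> tcarrier m" by (simp add: tcarrier_def)
lemma T_1: "m > 0 \<Longrightarrow> (1::'k::field poly) \<in> tcarrier m" by (simp add: tcarrier_def)
lemma T_x: "m > 1 \<Longrightarrow> [:0,1::'k::field:] \<in> tcarrier m" by (simp add: tcarrier_def)
lemma T_monom: "k < m \<Longrightarrow> monom c k \<in> tcarrier m"
proof -
  assume "k < m"
  moreover have "degree (monom c k) \<le> k" by (rule degree_monom_le)
  ultimately show ?thesis by (simp add: tcarrier_def)
qed

definition delta :: "nat \<Rightarrow> 'k::field poly \<Rightarrow> 'k poly \<Rightarrow> 'k poly" where
  "delta m h = (\<lambda>f. if f \<in> tcarrier m then (pderiv f * h) mod xm m else 0)"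

definition pb :: "nat \<Rightarrow> 'k::field poly \<Rightarrow> 'k poly \<Rightarrow> 'k poly" where
  "pb m g h = (g * pderiv h - h * pderiv g) mod xm m"

lemma delta_in_der: assumes "CHAR('k) dvd m" "m > 0"
  shows "delta m (h::'k::field poly) \<in> der_set m"
proof -
  have L: "delta m h (tmult m f g) = tmult m f (delta m h g) + tmult m (delta m h f) g"
    if "f \<in> tcarrier m" "g \<in> tcarrier m" for f g
  proof -
    have "delta m h (tmult m f g) = (pderiv (f*g) * h) mod xm m"
      using pderiv_mod[OF assms(1), of "f*g" h] mod_in_T[OF assms(2), of "f*g"]
      by (simp add: delta_def tmult_def del: pderiv_mult)
    also have "\<dots> = (f * (pderiv g * h) + (pderiv f * h) * g) mod xm m"
      by (simp add: pderiv_mult algebra_simps)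
    also have "\<dots> = (f * ((pderiv g * h) mod xm m)) mod xm m + (((pderiv f * h) mod xm m) * g) mod xm m"
      by (simp add: poly_mod_add_left mod_mult_left_eq mod_mult_right_eq)
    finally show ?thesis using that by (simp add: delta_def tmult_def)
  qed
  have A: "delta m h (f + g) = delta m h f + delta m h g" if "f \<in> tcarrier m" "g \<in> tcarrier m" for f g
    using that T_add[OF that] by (simp add: delta_def pderiv_add algebra_simps poly_mod_add_left)
  have S: "delta m h (smult c f) = smult c (delta m h f)" if "f \<in> tcarrier m" for f c
    using that T_smult[OF that] by (simp add: delta_def pderiv_smult mod_smult_left)
  have C: "delta m h f \<in> tcarrier m" for f
    unfolding delta_def by (simp add: mod_in_T[OF assms(2)] T_0[OF assms(2)])
  have Z: "f \<notin> tcarrier m \<Longrightarrow> delta m h f = 0" for f by (simp add: delta_def)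
  show ?thesis unfolding der_set_def using L A S C Z by blast
qed

lemma pCons_as: "pCons a (p::'k::field poly) = [:a:] + [:0,1:] * p"
  by (simp add: mult_pCons_left smult_1_left)

lemma der_is_delta: assumes "CHAR('k) dvd m" "m > 1" "D \<in> der_set m"
  shows "D = delta m (D [:0,1::'k::field:])"
proof -
  have m0: "m > 0" using assms by simp
  note T = T_0[OF m0, where 'k='k] T_1[OF m0, where 'k='k] T_x[OF assms(2), where 'k='k]
  have Dnot: "f \<notin> tcarrier m \<Longrightarrow> D f = 0" for f using assms(3) by (simp add: der_set_def)
  have DT: "f \<in> tcarrier m \<Longrightarrow> D f \<in> tcarrier m" for f using assms(3) by (simp add: der_set_def)
  have Dadd: "f \<in> tcarrier m \<Longrightarrow> g \<in> tcarrier m \<Longrightarrow> D (f + g) = D f + D g" for f g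
    using assms(3) by (simp add: der_set_def)
  have Dsm: "f \<in> tcarrier m \<Longrightarrow> D (smult c f) = smult c (D f)" for f c
    using assms(3) by (simp add: der_set_def)
  have DL: "f \<in> tcarrier m \<Longrightarrow> g \<in> tcarrier m \<Longrightarrow> D (tmult m f g) = tmult m f (D g) + tmult m (D f) g" for f g
    using assms(3) by (simp add: der_set_def)
  have "tmult m 1 1 = (1::'k poly)" by (simp add: tmult_def mod_T T)
  hence "D 1 = tmult m 1 (D 1) + tmult m (D 1) 1" using DL[of 1 1] T by simp
  also have "\<dots> = D 1 + D 1" using mod_T[OF DT[OF T(2)]] by (simp add: tmult_def)
  finally have D1: "D 1 = 0" by (metis add.right_neutral add_left_cancel)
  have Dc: "D [:c:] = 0" for c using Dsm[of 1 c] T D1 by (metis smult_one smult_0_right)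
  define h where "h = D [:0,1:]"
  have main: "f \<in> tcarrier m \<longrightarrow> D f = (pderiv f * h) mod xm m" for f
  proof (induction f rule: pCons_induct)
    case 0
    then show ?case using Dc[of 0] by simp
  next
    case (pCons a p)
    show ?case
    proof
      assume f: "pCons a p \<in> tcarrier m"
      show "D (pCons a p) = pderiv (pCons a p) * h mod xm m"
      proof (cases "p = 0")
        case True
        then show ?thesis using Dc[of a] by simp
      next
        case False
        have pT: "p \<in> tcarrier m" using f False by (simp add: tcarrier_def)
        have xpT: "[:0,1:] * p \<in> tcarrier m" using f False by (simp add: tcarrier_def mult_pCons_left)
        have tm: "tmult m [:0,1:] p = [:0,1:] * p" using xpT by (simp add: tmult_def mod_T)
        have "D (pCons a p) = D [:a:] + D ([:0,1:] * p)"
          using Dadd[of "[:a:]" "[:0,1:] * p"] xpT unfolding pCons_as[of a p] by (simp add: tcarrier_def)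
        also have "\<dots> = tmult m [:0,1:] (D p) + tmult m h p"
          using Dc[of a] DL[of "[:0,1:]" p] pT T tm h_def by simp
        also have "\<dots> = ([:0,1:] * ((pderiv p * h) mod xm m)) mod xm m + (h * p) mod xm m"
          using pCons pT by (simp add: tmult_def)
        also have "\<dots> = ([:0,1:] * (pderiv p * h)) mod xm m + (h * p) mod xm m"
          by (rule arg_cong2[where f="(+)", OF mod_mult_right_eq refl])
        also have "\<dots> = pderiv (pCons a p) * h mod xm m"
        proof -
          have e: "pderiv (pCons a p) * h = [:0,1:] * (pderiv p * h) + h * p"
            by (simp add: pderiv_pCons algebra_simps mult_pCons_left)
          show ?thesis by (simp only: e poly_mod_add_left)
        qed
        finally show ?thesis .
      qed
    qed
  qed
  show ?thesis
  proof
    fix f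
    show "D f = delta m (D [:0,1:]) f"
      using main[of f] Dnot[of f] by (auto simp: delta_def h_def)
  qed
qed

lemma delta_x: assumes "m > 1" "h \<in> tcarrier m"
  shows "delta m h [:0,1:] = h"
  using assms by (simp add: delta_def T_x mod_T pderiv_pCons)

lemma der_in_img: assumes "CHAR('k) dvd m" "m > 1" "D \<in> der_set m"
  shows "D \<in> delta m ` (tcarrier m :: 'k::field poly set)"
proof -
  have "D [:0,1:] \<in> tcarrier m" using assms(3) T_x[OF assms(2), where 'k='k] unfolding der_set_def by blast
  thus ?thesis using der_is_delta[OF assms] by blast
qed

lemma der_set_eq: assumes "CHAR('k) dvd m" "m > 1"
  shows "der_set m = delta m ` (tcarrier m :: 'k::field poly set)"
  using der_in_img[OF assms] delta_in_der[OF assms(1)] assms(2) by auto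

lemma delta_inj: "m > 1 \<Longrightarrow> inj_on (delta m) (tcarrier m :: 'k::field poly set)"
  by (metis delta_x inj_onI)

lemma delta_add: "(\<lambda>x. delta m g x + delta m h x) = delta m (g + h)"
  by (rule ext) (simp add: delta_def algebra_simps poly_mod_add_left)

lemma delta_smult: "(\<lambda>x. smult c (delta m h x)) = delta m (smult c h)"
  by (rule ext) (simp add: delta_def mod_smult_left)

lemma delta_zero: "(\<lambda>_. 0) = delta m 0"
  by (rule ext) (simp add: delta_def)

lemma delta_br: assumes "CHAR('k) dvd m" "m > 0"
  shows "(\<lambda>x. delta m g (delta m h x) - delta m h (delta m g x)) = delta m (pb m g (h::'k::field poly))"
proof
  fix f :: "'k poly"
  show "delta m g (delta m h f) - delta m h (delta m g f) = delta m (pb m g h) f"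
  proof (cases "f \<in> tcarrier m")
    case False
    then show ?thesis using T_0[OF assms(2), where 'k='k] by (simp add: delta_def)
  next
    case True
    have "delta m g (delta m h f) - delta m h (delta m g f)
        = (pderiv (pderiv f * h) * g) mod xm m - (pderiv (pderiv f * g) * h) mod xm m"
      using True by (simp add: mod_in_T[OF assms(2)] pderiv_mod[OF assms(1)] delta_def del: pderiv_mult)
    also have "\<dots> = (pderiv (pderiv f * h) * g - pderiv (pderiv f * g) * h) mod xm m"
      by (simp add: poly_mod_diff_left)
    also have "pderiv (pderiv f * h) * g - pderiv (pderiv f * g) * h = pderiv f * (g * pderiv h - h * pderiv g)"
      by (simp add: pderiv_mult algebra_simps)
    also have "(pderiv f * (g * pderiv h - h * pderiv g)) mod xm m = (pderiv f * pb m g h) mod xm m"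
      by (simp add: pb_def mod_mult_right_eq)
    finally show ?thesis using True by (simp add: delta_def)
  qed
qed

definition rep :: "nat \<Rightarrow> ('k::field, 'a) lie_alg \<Rightarrow> ('k poly \<Rightarrow> 'a) \<Rightarrow> bool" where
  "rep m L \<phi> \<longleftrightarrow> lcarrier L = \<phi> ` tcarrier m \<and> inj_on \<phi> (tcarrier m) \<and> lzero L = \<phi> 0 \<and>
     (\<forall>g\<in>tcarrier m. \<forall>h\<in>tcarrier m. ladd L (\<phi> g) (\<phi> h) = \<phi> (g + h)) \<and>
     (\<forall>c. \<forall>h\<in>tcarrier m. lsmult L c (\<phi> h) = \<phi> (smult c h)) \<and>
     (\<forall>g\<in>tcarrier m. \<forall>h\<in>tcarrier m. lbr L (\<phi> g) (\<phi> h) = \<phi> (pb m g h))"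

lemma rep_Der: assumes "CHAR('k) dvd m" "m > 1"
  shows "rep m (Der_lie m :: ('k::field, _) lie_alg) (delta m)"
  unfolding rep_def Der_lie_def
  using assms(2)
  by (simp add: der_set_eq[OF assms] delta_inj[OF assms(2)] delta_add delta_smult delta_zero[symmetric]
    delta_br[OF assms(1)])

lemma inner_ders_zero: assumes "m > 0" shows "inner_ders m = {(\<lambda>_. 0::'k::field poly)}"
proof -
  have "(\<lambda>_. 0) = (\<lambda>g. if g \<in> tcarrier m then f * g mod xm m - g * f mod xm m else (0::'k poly))" for f
    by (auto simp: mult.commute)
  hence "\<And>f. (\<lambda>g. if g \<in> tcarrier m then tmult m f g - tmult m g f else (0::'k poly)) = (\<lambda>_. 0)"
    unfolding tmult_def by (metis (no_types))
  thus ?thesis using assms by (auto simp: inner_ders_def intro!: exI[of _ 0] simp: tcarrier_def)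

qed

lemma lcoset_single: "m > 0 \<Longrightarrow> lcoset (Der_lie m) (inner_ders m) D = {D}"
  by (simp add: lcoset_def inner_ders_zero Der_lie_def)

lemma rep_HH1: assumes "CHAR('k) dvd m" "m > 1"
  shows "rep m (HH1 m :: ('k::field, _) lie_alg) (\<lambda>h. {delta m h})"
proof -
  have R: "rep m (Der_lie m :: ('k::field, _) lie_alg) (delta m)" by (rule rep_Der[OF assms])
  have inj: "inj_on (\<lambda>h. {delta m h}) (tcarrier m :: 'k poly set)"
    using delta_inj[OF assms(2)] by (auto simp: inj_on_def)
  show ?thesis
    using R inj unfolding rep_def HH1_def lquot_def
    using assms(2) by (simp add: lcoset_single image_image)
qed

context
  fixes m :: nat and L :: "('k::field, 'a) lie_alg" and \<phi> :: "'k poly \<Rightarrow> 'a"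
  assumes R: "rep m L \<phi>" and m0: "m > 0"
begin

lemma R_carrier: "lcarrier L = \<phi> ` tcarrier m" using R by (simp add: rep_def)
lemma R_inj: "inj_on \<phi> (tcarrier m)" using R by (simp add: rep_def)
lemma R_zero: "lzero L = \<phi> 0" using R by (simp add: rep_def)
lemma R_add: "g \<in> tcarrier m \<Longrightarrow> h \<in> tcarrier m \<Longrightarrow> ladd L (\<phi> g) (\<phi> h) = \<phi> (g + h)"
  using R by (simp add: rep_def)
lemma R_smult: "h \<in> tcarrier m \<Longrightarrow> lsmult L c (\<phi> h) = \<phi> (smult c h)"
  using R by (simp add: rep_def)
lemma R_br: "g \<in> tcarrier m \<Longrightarrow> h \<in> tcarrier m \<Longrightarrow> lbr L (\<phi> g) (\<phi> h) = \<phi> (pb m g h)"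
  using R by (simp add: rep_def)
lemma R_in: "h \<in> tcarrier m \<Longrightarrow> \<phi> h \<in> lcarrier L" using R_carrier by simp
lemma R_eq: "g \<in> tcarrier m \<Longrightarrow> h \<in> tcarrier m \<Longrightarrow> \<phi> g = \<phi> h \<longleftrightarrow> g = h"
  using R_inj by (auto simp: inj_on_def)
lemma pb_T: "pb m g h \<in> tcarrier m" unfolding pb_def by (rule mod_in_T[OF m0])

lemma R_zero_sub: "lsubspace L {lzero L}"
  unfolding lsubspace_def using T_0[OF m0, where 'k='k]
  by (auto simp: R_zero R_add R_smult R_in)

lemma lspan_sub_zero: assumes "X \<subseteq> {lzero L}" shows "lspan L X = {lzero L}"
proof
  show "lspan L X \<subseteq> {lzero L}" unfolding lspan_def using R_zero_sub assms by blast
  show "{lzero L} \<subseteq> lspan L X" unfolding lspan_def lsubspace_def by blast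
qed

lemma sub_scale: assumes S: "lsubspace L S" and h: "h \<in> tcarrier m" and c: "c \<noteq> 0"
  and in_S: "\<phi> (smult c h) \<in> S" shows "\<phi> h \<in> S"
proof -
  have "lsmult L (inverse c) (\<phi> (smult c h)) \<in> S" using S in_S by (simp add: lsubspace_def)
  moreover have "lsmult L (inverse c) (\<phi> (smult c h)) = \<phi> h"
    using R_smult[OF T_smult[OF h]] c by simp
  ultimately show ?thesis by simp
qed

lemma sub_all: assumes S: "lsubspace L S" and mon: "\<And>k. k < m \<Longrightarrow> \<phi> (monom 1 k) \<in> S"
  shows "lcarrier L \<subseteq> S"
proof -
  have mc: "\<phi> (monom c k) \<in> S" if "k < m" for c k
  proof -
    have "lsmult L c (\<phi> (monom 1 k)) \<in> S" using S mon[OF that] by (simp add: lsubspace_def)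
    thus ?thesis using R_smult[OF T_monom[OF that]] by (simp add: smult_monom)
  qed
  have "\<forall>h. degree h \<le> n \<longrightarrow> h \<in> tcarrier m \<longrightarrow> \<phi> h \<in> S" for n
  proof (induction n)
    case 0
    show ?case
    proof (intro allI impI)
      fix h :: "'k poly" assume "degree h \<le> 0" "h \<in> tcarrier m"
      hence "h = monom (coeff h 0) 0" by (metis degree_0_id le_zero_eq monom_0)
      thus "\<phi> h \<in> S" using mc[OF m0] by metis
    qed
  next
    case (Suc n)
    show ?case
    proof (intro allI impI)
      fix h :: "'k poly" assume h: "degree h \<le> Suc n" "h \<in> tcarrier m"
      show "\<phi> h \<in> S"
      proof (cases "degree h \<le> n")
        case True then show ?thesis using Suc h by blast
      next
        case False
        hence dh: "degree h = Suc n" using h by simp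
        hence sm: "Suc n < m" using h by (simp add: tcarrier_def)
        define r where "r = h - monom (coeff h (Suc n)) (Suc n)"
        have dr: "degree r \<le> n" unfolding r_def
          by (rule degree_le) (use dh in \<open>auto simp: coeff_monom coeff_eq_0\<close>)
        have rT: "r \<in> tcarrier m" using dr sm by (simp add: tcarrier_def)
        have hr: "h = monom (coeff h (Suc n)) (Suc n) + r" by (simp add: r_def)
        have "ladd L (\<phi> (monom (coeff h (Suc n)) (Suc n))) (\<phi> r) \<in> S"
          using S mc[OF sm] Suc rT dr by (simp add: lsubspace_def)
        thus ?thesis using R_add[OF T_monom[OF sm] rT] hr by simp
      qed
    qed
  qed
  thus ?thesis using R_carrier by (auto simp: tcarrier_def)
qed

end

lemma degree_pderiv_le1: "degree (pderiv (h::'k::field poly)) \<le> degree h - 1"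
  by (rule degree_le) (auto simp: coeff_pderiv coeff_eq_0)

lemma pderiv_T: "h \<in> tcarrier m \<Longrightarrow> pderiv (h::'k::field poly) \<in> tcarrier m"
  using degree_pderiv_le1[of h] by (simp add: tcarrier_def)

lemma pb_1_h: "h \<in> tcarrier m \<Longrightarrow> pb m 1 (h::'k::field poly) = pderiv h"
  by (simp add: pb_def mod_T pderiv_T)

lemma pb_xk_1: "Suc k < m \<Longrightarrow> pb m (monom 1 (Suc k)) (1::'k::field poly) = smult (- of_nat (Suc k)) (monom 1 k)"
  by (simp add: pb_def pderiv_monom mod_T T_monom smult_monom poly_mod_minus_left minus_monom)

lemma pb_xk_x: "Suc k < m \<Longrightarrow> pb m (monom 1 (Suc k)) (monom 1 1 :: 'k::field poly) = smult (1 - of_nat (Suc k)) (monom 1 (Suc k))"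
proof -
  assume a: "Suc k < m"
  have "monom 1 (Suc k) * pderiv (monom 1 1) - monom 1 1 * pderiv (monom 1 (Suc k)) = smult (1 - of_nat (Suc k)) (monom (1::'k) (Suc k))"
    by (simp add: pderiv_monom mult_monom smult_monom diff_monom)
  thus ?thesis using a by (simp add: pb_def mod_T T_monom T_smult)
qed

lemma pb_1_x: "m > 1 \<Longrightarrow> pb m 1 (monom 1 1 :: 'k::field poly) = 1"
  by (simp add: pb_def pderiv_monom mod_T T_1)

context
  fixes m :: nat and L :: "('k::field, 'a) lie_alg" and \<phi> :: "'k poly \<Rightarrow> 'a"
  assumes R: "rep m L \<phi>" and chm: "CHAR('k) = m" and m2: "m > 2"
begin

lemma m0': "m > 0" using m2 by simp
lemma Tm: "k < m \<Longrightarrow> monom (c::'k) k \<in> tcarrier m" by (rule T_monom)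
lemma T1: "(1::'k poly) \<in> tcarrier m" by (rule T_1[OF m0'])
lemma T0: "(0::'k poly) \<in> tcarrier m" by (rule T_0[OF m0'])
lemmas pbx1 = pb_xk_1[where 'k='k] and pbxx = pb_xk_x[where 'k='k] and pb1x = pb_1_x[where 'k='k]
  and pb1h = pb_1_h[where 'k='k]

lemma ofnat_ne: "0 < n \<Longrightarrow> n < m \<Longrightarrow> (of_nat n :: 'k) \<noteq> 0"
  using chm by (auto simp: of_nat_eq_0_iff_char_dvd dest: dvd_imp_le)

lemma two_ne: "(1 - of_nat (m - 1) :: 'k) \<noteq> 0"
proof -
  have "(of_nat (m - 1) :: 'k) + 1 = of_nat m" using m2 by (metis One_nat_def Suc_pred m0' of_nat_Suc add.commute)
  also have "\<dots> = 0" using chm by (simp add: of_nat_eq_0_iff_char_dvd)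
  finally have e0: "(of_nat (m - 1) :: 'k) + 1 = 0" .
  have e: "(of_nat (m - 1) :: 'k) = - 1" using e0 by (metis add_diff_cancel_right' diff_0)
  have "(1 - of_nat (m - 1) :: 'k) = of_nat 2" unfolding e by simp
  moreover have "(of_nat 2 :: 'k) \<noteq> 0" using ofnat_ne[of 2] m2 by simp
  ultimately show ?thesis by metis
qed

lemma gen2: assumes S: "lsubspace L S"
  and br: "\<And>k. Suc k < m \<Longrightarrow> lbr L (\<phi> (monom 1 (Suc k))) (\<phi> 1) \<in> S"
  and k: "Suc k < m" shows "\<phi> (monom 1 k) \<in> S"
proof -
  have "lbr L (\<phi> (monom 1 (Suc k))) (\<phi> 1) = \<phi> (smult (- of_nat (Suc k)) (monom 1 k))"
    using R_br[OF R m0' Tm[OF k, of 1] T1] pbx1[OF k] by simp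
  hence "\<phi> (smult (- of_nat (Suc k)) (monom 1 k)) \<in> S" using br[OF k] by simp
  moreover have "(of_nat (Suc k) :: 'k) \<noteq> 0" using ofnat_ne[of "Suc k"] k by simp
  hence "(- of_nat (Suc k) :: 'k) \<noteq> 0" by (metis neg_equal_0_iff_equal)
  ultimately show ?thesis using sub_scale[OF R m0' S Tm[of k 1]] Suc_lessD[OF k] by blast
qed

lemma gen3: assumes S: "lsubspace L S"
  and br: "lbr L (\<phi> (monom 1 (m - 1))) (\<phi> (monom 1 1)) \<in> S"
  shows "\<phi> (monom 1 (m - 1)) \<in> S"
proof -
  have k: "Suc (m - 2) < m" "Suc (m - 2) = m - 1" using m2 by auto
  have "lbr L (\<phi> (monom 1 (m - 1))) (\<phi> (monom 1 1)) = \<phi> (smult (1 - of_nat (m - 1)) (monom 1 (m - 1)))"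
    using R_br[OF R m0' Tm[OF k(1), of 1] Tm[of 1 1]] pbxx[OF k(1)] m2 k(2) by simp
  hence "\<phi> (smult (1 - of_nat (m - 1)) (monom 1 (m - 1))) \<in> S" using br by simp
  moreover have "m - 1 < m" using m2 by simp
  ultimately show ?thesis using sub_scale[OF R m0' S Tm[of "m - 1" 1] two_ne] by blast
qed

lemma gen_all: assumes S: "lsubspace L S"
  and br1: "\<And>k. Suc k < m \<Longrightarrow> lbr L (\<phi> (monom 1 (Suc k))) (\<phi> 1) \<in> S"
  and br2: "\<phi> (monom 1 1) \<in> S \<Longrightarrow> lbr L (\<phi> (monom 1 (m - 1))) (\<phi> (monom 1 1)) \<in> S"
  shows "lcarrier L \<subseteq> S"
proof (rule sub_all[OF R m0' S])
  fix k assume k: "k < m"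
  show "\<phi> (monom 1 k) \<in> S"
  proof (cases "Suc k < m")
    case True then show ?thesis using gen2[OF S br1] by blast
  next
    case False
    hence "k = m - 1" using k by simp
    moreover have "\<phi> (monom 1 1) \<in> S" using gen2[OF S br1, of 1] m2 by simp
    ultimately show ?thesis using gen3[OF S br2] by simp
  qed
qed

lemma perfect: assumes S: "lsubspace L S" and br: "\<forall>a\<in>lcarrier L. \<forall>b\<in>lcarrier L. lbr L a b \<in> S"
  shows "lcarrier L \<subseteq> S"
  by (rule gen_all[OF S]) (use br R_in[OF R m0'] Tm T1 m2 in auto)

lemma descent: assumes I: "lideal L I"
  shows "\<forall>h. degree h = n \<longrightarrow> h \<in> tcarrier m \<longrightarrow> h \<noteq> 0 \<longrightarrow> \<phi> h \<in> I \<longrightarrow> \<phi> 1 \<in> I"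
proof (induction n)
  case 0
  show ?case
  proof (intro allI impI)
    fix h :: "'k poly" assume h: "degree h = 0" "h \<in> tcarrier m" "h \<noteq> 0" "\<phi> h \<in> I"
    have hc: "h = [:coeff h 0:]" using h(1) by (metis degree_0_id)
    hence c: "coeff h 0 \<noteq> 0" using h(3) by (metis pCons_0_0)
    have "\<phi> (smult (coeff h 0) 1) \<in> I" using h(4) hc by (metis smult_one)
    thus "\<phi> 1 \<in> I" using sub_scale[OF R m0' _ T1 c] I by (simp add: lideal_def)
  qed
next
  case (Suc n)
  show ?case
  proof (intro allI impI)
    fix h :: "'k poly" assume h: "degree h = Suc n" "h \<in> tcarrier m" "h \<noteq> 0" "\<phi> h \<in> I"
    have sm: "Suc n < m" using h by (simp add: tcarrier_def)
    have cn: "coeff (pderiv h) n \<noteq> 0"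
      using ofnat_ne[OF _ sm] h(1,3) leading_coeff_neq_0[of h] by (simp add: coeff_pderiv)
    have dp: "degree (pderiv h) = n"
      using degree_pderiv_le1[of h] h(1) le_degree[OF cn] by simp
    have "lbr L (\<phi> 1) (\<phi> h) \<in> I" using I h(4) R_in[OF R m0' T1] by (simp add: lideal_def)
    hence "\<phi> (pderiv h) \<in> I" using R_br[OF R m0' T1 h(2)] pb1h[OF h(2)] by simp
    thus "\<phi> 1 \<in> I" using Suc dp pderiv_T[OF h(2)] cn by (metis coeff_0)
  qed
qed

lemma simple: "lsimple L"
  unfolding lsimple_def
proof (intro conjI allI impI)
  have "lbr L (\<phi> 1) (\<phi> (monom 1 1)) = \<phi> 1"
    using R_br[OF R m0' T1 Tm[of 1 1]] pb1x[of m] m2 by simp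
  moreover have "\<phi> 1 \<noteq> lzero L"
    using R_zero[OF R m0'] R_eq[OF R m0' T1 T0] by simp
  moreover have "\<phi> (monom 1 1) \<in> lcarrier L" using R_in[OF R m0' Tm[of 1 1]] m2 by simp
  ultimately show "\<exists>x\<in>lcarrier L. \<exists>y\<in>lcarrier L. lbr L x y \<noteq> lzero L"
    using R_in[OF R m0' T1] by metis
next
  fix I assume I: "lideal L I"
  show "I = {lzero L} \<or> I = lcarrier L"
  proof (cases "I \<subseteq> {lzero L}")
    case True
    then show ?thesis using I by (auto simp: lideal_def lsubspace_def)
  next
    case False
    then obtain y where y: "y \<in> I" "y \<noteq> lzero L" by blast
    have "I \<subseteq> lcarrier L" using I by (simp add: lideal_def lsubspace_def)
    then obtain h where h: "h \<in> tcarrier m" "y = \<phi> h" using y R_carrier[OF R m0'] by blast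
    have "h \<noteq> 0" using h y R_zero[OF R m0'] by auto
    hence one: "\<phi> 1 \<in> I" using descent[OF I] h y by blast
    have S: "lsubspace L I" using I by (simp add: lideal_def)
    have "lcarrier L \<subseteq> I"
    proof (rule gen_all[OF S])
      fix k assume "Suc k < m"
      thus "lbr L (\<phi> (monom 1 (Suc k))) (\<phi> 1) \<in> I"
        using I one R_in[OF R m0' Tm] by (simp add: lideal_def)
    next
      assume "\<phi> (monom 1 1) \<in> I"
      thus "lbr L (\<phi> (monom 1 (m - 1))) (\<phi> (monom 1 1)) \<in> I"
        using I R_in[OF R m0' Tm[of "m - 1" 1]] m2 by (simp add: lideal_def)
    qed
    thus ?thesis using \<open>I \<subseteq> lcarrier L\<close> by blast
  qed
qed

end

context
  fixes m :: nat and L :: "('k::field, 'a) lie_alg" and \<phi> :: "'k poly \<Rightarrow> 'a"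
  assumes R: "rep m L \<phi>" and chm: "CHAR('k) = m" and m2: "m > 2"
begin

lemma m0'': "m > 0" using m2 by simp

lemma der_sup: assumes "lcarrier L \<subseteq> A" shows "lcarrier L \<subseteq> lderived L A"
  unfolding lderived_def lspan_def
proof (rule Inter_greatest)
  fix S assume "S \<in> {S. lsubspace L S \<and> {lbr L x y |x y. x \<in> A \<and> y \<in> A} \<subseteq> S}"
  hence S: "lsubspace L S" and b: "{lbr L x y |x y. x \<in> A \<and> y \<in> A} \<subseteq> S" by auto
  show "lcarrier L \<subseteq> S" using perfect[OF R chm m2 S] b assms by blast
qed

lemma der_pow_sup: "lcarrier L \<subseteq> (lderived L ^^ n) (lcarrier L)"
  by (induction n) (auto intro: der_sup[THEN subsetD])

lemma semisimple: "lsemisimple L"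
  unfolding lsemisimple_def lradical_def
proof (rule lspan_sub_zero[OF R m0''])
  have one: "\<phi> 1 \<in> lcarrier L" "\<phi> 1 \<noteq> lzero L"
    using R_in[OF R m0'' T_1[OF m0'']] R_zero[OF R m0''] R_eq[OF R m0'' T_1[OF m0''] T_0[OF m0'']]
    by auto
  show "\<Union> {I. lsolvable_ideal L I} \<subseteq> {lzero L}"
  proof
    fix x assume "x \<in> \<Union> {I. lsolvable_ideal L I}"
    then obtain I where I: "lsolvable_ideal L I" "x \<in> I" by blast
    obtain n where n: "(lderived L ^^ n) I = {lzero L}" using I(1) by (auto simp: lsolvable_ideal_def)
    have "I = {lzero L} \<or> I = lcarrier L" using simple[OF R chm m2] I(1)
      by (simp add: lsimple_def lsolvable_ideal_def)
    moreover have "I \<noteq> lcarrier L"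
    proof
      assume "I = lcarrier L"
      hence "lcarrier L \<subseteq> {lzero L}" using der_pow_sup[of n] n by simp
      thus False using one by blast
    qed
    ultimately show "x \<in> {lzero L}" using I(2) by blast
  qed
qed

end

context
  fixes m :: nat and L :: "('k::field, 'a) lie_alg" and \<phi> :: "'k poly \<Rightarrow> 'a"
  assumes R: "rep m L \<phi>" and m0: "m > 0"
begin

lemma bad_ideal:
  assumes JT: "J \<subseteq> (tcarrier m :: 'k poly set)" and J0: "0 \<in> J"
    and Jadd: "\<And>g h. g \<in> J \<Longrightarrow> h \<in> J \<Longrightarrow> g + h \<in> J"
    and Jsm: "\<And>c h. h \<in> J \<Longrightarrow> smult c h \<in> J"
    and Jbr: "\<And>g h. g \<in> tcarrier m \<Longrightarrow> h \<in> J \<Longrightarrow> pb m g h \<in> J"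
    and Jab: "\<And>g h. g \<in> J \<Longrightarrow> h \<in> J \<Longrightarrow> pb m g h = 0"
    and Jnz: "h1 \<in> J" "h1 \<noteq> 0"
    and Jpr: "h2 \<in> tcarrier m" "h2 \<notin> J"
  shows "\<not> lsimple L \<and> \<not> lsemisimple L"
proof -
  define I where "I = \<phi> ` J"
  have sub: "lsubspace L I"
    unfolding lsubspace_def I_def
  proof (intro conjI ballI allI)
    show "\<phi> ` J \<subseteq> lcarrier L" using JT R_carrier[OF R m0] by auto
    show "lzero L \<in> \<phi> ` J" using J0 R_zero[OF R m0] by simp
  next
    fix x y assume "x \<in> \<phi> ` J" "y \<in> \<phi> ` J"
    then obtain g h where "g \<in> J" "h \<in> J" "x = \<phi> g" "y = \<phi> h" by blast
    moreover have "ladd L (\<phi> g) (\<phi> h) = \<phi> (g + h)" using R_add[OF R m0] JT calculation by blast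
    ultimately show "ladd L x y \<in> \<phi> ` J" using Jadd by blast
  next
    fix c x assume "x \<in> \<phi> ` J"
    then obtain h where "h \<in> J" "x = \<phi> h" by blast
    moreover have "lsmult L c (\<phi> h) = \<phi> (smult c h)" using R_smult[OF R m0] JT calculation by blast
    ultimately show "lsmult L c x \<in> \<phi> ` J" using Jsm by blast
  qed
  have ideal: "lideal L I"
    unfolding lideal_def
  proof (intro conjI ballI sub)
    fix x y assume "x \<in> lcarrier L" "y \<in> I"
    then obtain g h where "g \<in> tcarrier m" "h \<in> J" "x = \<phi> g" "y = \<phi> h"
      using R_carrier[OF R m0] I_def by blast
    moreover have "lbr L (\<phi> g) (\<phi> h) = \<phi> (pb m g h)" using R_br[OF R m0] JT calculation by blast
    ultimately show "lbr L x y \<in> I" using Jbr I_def by blast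
  qed
  have nz: "\<phi> h1 \<in> I" "\<phi> h1 \<noteq> lzero L"
    using Jnz JT I_def R_zero[OF R m0] R_eq[OF R m0 _ T_0[OF m0]] by auto
  have pr: "I \<noteq> lcarrier L"
  proof
    assume "I = lcarrier L"
    hence "\<phi> h2 \<in> \<phi> ` J" using Jpr R_in[OF R m0] I_def by auto
    then obtain j where "j \<in> J" "\<phi> h2 = \<phi> j" by auto
    thus False using Jpr JT R_eq[OF R m0] by auto
  qed
  have "\<not> lsimple L" using ideal nz pr by (auto simp: lsimple_def)
  moreover have "\<not> lsemisimple L"
  proof
    have brs: "{lbr L x y |x y. x \<in> I \<and> y \<in> I} \<subseteq> {lzero L}"
    proof
      fix z assume "z \<in> {lbr L x y |x y. x \<in> I \<and> y \<in> I}"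
      then obtain g h where "g \<in> J" "h \<in> J" "z = lbr L (\<phi> g) (\<phi> h)" using I_def by blast
      moreover have "g \<in> tcarrier m" "h \<in> tcarrier m" using JT calculation by auto
      ultimately show "z \<in> {lzero L}" using R_br[OF R m0, of g h] Jab[of g h] R_zero[OF R m0] by simp
    qed
    have "(lderived L ^^ 1) I = {lzero L}"
      using lspan_sub_zero[OF R m0 brs] by (simp add: lderived_def)
    hence solv: "lsolvable_ideal L I" using ideal unfolding lsolvable_ideal_def by blast
    assume "lsemisimple L"
    hence "lradical L = {lzero L}" by (simp add: lsemisimple_def)
    moreover have "I \<subseteq> lradical L" using solv unfolding lradical_def lspan_def by blast
    ultimately show False using nz by blast
  qed
  ultimately show ?thesis by blast
qed

end

lemma rep_iso: assumes RL: "rep m L \<phi>" and RM: "rep m M \<psi>" and m0: "m > 0"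
  shows "lie_iso L M (\<lambda>a. \<psi> (inv_into (tcarrier m) \<phi> a))"
proof -
  let ?f = "\<lambda>a. \<psi> (inv_into (tcarrier m) \<phi> a)"
  have fphi: "?f (\<phi> h) = \<psi> h" if "h \<in> tcarrier m" for h
    using inv_into_f_f[OF R_inj[OF RL m0] that] by simp
  have bij: "bij_betw ?f (lcarrier L) (lcarrier M)"
    unfolding R_carrier[OF RL m0] R_carrier[OF RM m0]
    by (rule bij_betw_imageI)
      (auto simp: inj_on_def fphi R_eq[OF RM m0] R_eq[OF RL m0] image_iff)
  show ?thesis unfolding lie_iso_def
  proof (intro conjI ballI allI bij)
    fix x y assume "x \<in> lcarrier L" "y \<in> lcarrier L"
    then obtain g h where gh: "g \<in> tcarrier m" "h \<in> tcarrier m" "x = \<phi> g" "y = \<phi> h"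
      using R_carrier[OF RL m0] by blast
    show "?f (ladd L x y) = ladd M (?f x) (?f y)"
      using gh by (simp add: R_add[OF RL m0] R_add[OF RM m0] fphi T_add)
    show "?f (lbr L x y) = lbr M (?f x) (?f y)"
      using gh by (simp add: R_br[OF RL m0] R_br[OF RM m0] fphi pb_T[OF RL m0])
  next
    fix c x assume "x \<in> lcarrier L"
    then obtain h where h: "h \<in> tcarrier m" "x = \<phi> h" using R_carrier[OF RL m0] by blast
    show "?f (lsmult L c x) = lsmult M c (?f x)"
      using h by (simp add: R_smult[OF RL m0] R_smult[OF RM m0] fphi T_smult)
  qed
qed

lemma iso_zero: assumes f: "lie_iso L M f" and RL: "rep m L \<phi>" and RM: "rep n M \<psi>"
  and m0: "m > 0" and n0: "n > 0"
  shows "f (lzero L) = lzero M"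
proof -
  have z: "lzero L \<in> lcarrier L" "ladd L (lzero L) (lzero L) = lzero L"
    using R_zero[OF RL m0] R_in[OF RL m0 T_0[OF m0]] R_add[OF RL m0 T_0[OF m0] T_0[OF m0]] by auto
  have "f (lzero L) = ladd M (f (lzero L)) (f (lzero L))"
    using f z unfolding lie_iso_def by metis
  moreover have "f (lzero L) \<in> lcarrier M" using f z unfolding lie_iso_def bij_betw_def by blast
  then obtain h where h: "h \<in> tcarrier n" "f (lzero L) = \<psi> h" using R_carrier[OF RM n0] by blast
  ultimately have "\<psi> h = \<psi> (h + h)" using R_add[OF RM n0 h(1) h(1)] by simp
  hence "h = h + h" using R_eq[OF RM n0 h(1) T_add[OF h(1) h(1)]] by simp
  hence "h = 0" by (metis add.right_neutral add_left_cancel)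
  thus ?thesis using h R_zero[OF RM n0] by simp
qed

lemma iso_simple: assumes f: "lie_iso L M f" and z: "f (lzero L) = lzero M"
  and zc: "lzero L \<in> lcarrier L" and S: "lsimple M"
  shows "lsimple L"
proof -
  have bij: "bij_betw f (lcarrier L) (lcarrier M)" using f by (simp add: lie_iso_def)
  have inj: "inj_on f (lcarrier L)" and img: "f ` lcarrier L = lcarrier M"
    using bij by (auto simp: bij_betw_def)
  have fadd: "\<And>x y. x \<in> lcarrier L \<Longrightarrow> y \<in> lcarrier L \<Longrightarrow> f (ladd L x y) = ladd M (f x) (f y)"
   and fsm: "\<And>c x. x \<in> lcarrier L \<Longrightarrow> f (lsmult L c x) = lsmult M c (f x)"
   and fbr: "\<And>x y. x \<in> lcarrier L \<Longrightarrow> y \<in> lcarrier L \<Longrightarrow> f (lbr L x y) = lbr M (f x) (f y)"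
    using f by (auto simp: lie_iso_def)
  show ?thesis unfolding lsimple_def
  proof (intro conjI allI impI)
    obtain x y where xy: "x \<in> lcarrier M" "y \<in> lcarrier M" "lbr M x y \<noteq> lzero M"
      using S by (auto simp: lsimple_def)
    obtain x' y' where x'y': "x' \<in> lcarrier L" "y' \<in> lcarrier L" "x = f x'" "y = f y'"
      using xy img by blast
    have "lbr L x' y' \<noteq> lzero L" using fbr[OF x'y'(1,2)] x'y' xy z by auto
    thus "\<exists>x\<in>lcarrier L. \<exists>y\<in>lcarrier L. lbr L x y \<noteq> lzero L" using x'y' by blast
  next
    fix I assume I: "lideal L I"
    have IC: "I \<subseteq> lcarrier L" and z0: "lzero L \<in> I" using I by (auto simp: lideal_def lsubspace_def)
    have "lideal M (f ` I)"
      unfolding lideal_def lsubspace_def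
    proof (intro conjI ballI allI)
      show "f ` I \<subseteq> lcarrier M" using IC img by blast
      show "lzero M \<in> f ` I" using z z0 by force
    next
      fix a b assume "a \<in> f ` I" "b \<in> f ` I"
      then obtain a' b' where "a' \<in> I" "b' \<in> I" "a = f a'" "b = f b'" by blast
      moreover have "ladd L a' b' \<in> I" using I \<open>a' \<in> I\<close> \<open>b' \<in> I\<close> by (auto simp: lideal_def lsubspace_def)
      moreover have "ladd M a b = f (ladd L a' b')" using fadd[OF subsetD[OF IC \<open>a' \<in> I\<close>] subsetD[OF IC \<open>b' \<in> I\<close>]] \<open>a = f a'\<close> \<open>b = f b'\<close> by simp
      ultimately show "ladd M a b \<in> f ` I" by simp
    next
      fix c a assume "a \<in> f ` I"
      then obtain a' where "a' \<in> I" "a = f a'" by blast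
      moreover have "lsmult L c a' \<in> I" using I \<open>a' \<in> I\<close> by (auto simp: lideal_def lsubspace_def)
      moreover have "lsmult M c a = f (lsmult L c a')" using fsm[OF subsetD[OF IC \<open>a' \<in> I\<close>], of c] \<open>a = f a'\<close> by simp
      ultimately show "lsmult M c a \<in> f ` I" by simp
    next
      fix a b assume "a \<in> lcarrier M" "b \<in> f ` I"
      then obtain a' b' where "a' \<in> lcarrier L" "b' \<in> I" "a = f a'" "b = f b'" using img by blast
      moreover have "lbr L a' b' \<in> I" using I \<open>a' \<in> lcarrier L\<close> \<open>b' \<in> I\<close> by (auto simp: lideal_def)
      moreover have "lbr M a b = f (lbr L a' b')" using fbr[OF \<open>a' \<in> lcarrier L\<close> subsetD[OF IC \<open>b' \<in> I\<close>]] \<open>a = f a'\<close> \<open>b = f b'\<close> by simp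
      ultimately show "lbr M a b \<in> f ` I" by simp
    qed
    hence "f ` I = {lzero M} \<or> f ` I = lcarrier M" using S by (simp add: lsimple_def)
    thus "I = {lzero L} \<or> I = lcarrier L"
    proof
      assume "f ` I = {lzero M}"
      hence "\<forall>y\<in>I. f y = f (lzero L)" using z by auto
      hence "\<forall>y\<in>I. y = lzero L" using inj_onD[OF inj] IC zc by blast
      thus ?thesis using z0 by blast
    next
      assume "f ` I = lcarrier M"
      hence "f ` I = f ` lcarrier L" using img by simp
      thus ?thesis using inj_on_image_eq_iff[OF inj IC] by blast
    qed
  qed
qed

lemma xm_dvd: "a \<le> b \<Longrightarrow> (xm a :: 'k::field poly) dvd xm b"
proof -
  assume "a \<le> b"
  hence "(xm b :: 'k poly) = xm a * xm (b - a)" by (simp add: mult_monom)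
  thus ?thesis by simp
qed

lemma caseA:
  fixes L :: "('k::field, 'a) lie_alg"
  assumes R: "rep m L \<phi>" and dv: "CHAR('k) dvd m" and p0: "CHAR('k) > 0" and mge: "m \<ge> 2 * CHAR('k)"
  shows "\<not> lsimple L \<and> \<not> lsemisimple L"
proof -
  define p where "p = CHAR('k)"
  define X :: "'k poly" where "X = xm (m - p)"
  have m0: "m > 0" using p0 mge p_def by simp
  have dv2: "CHAR('k) dvd (m - p)" using dv p_def by (simp add: dvd_diff_nat)
  have pX: "pderiv X = 0" unfolding X_def by (rule pderiv_xm[OF dv2])
  have Xdvd: "X dvd xm m" unfolding X_def by (rule xm_dvd) simp
  have XX: "xm m dvd X * X" unfolding X_def using mge p_def by (simp add: mult_monom xm_dvd)
  define J where "J = {h \<in> tcarrier m. X dvd h}"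
  have XT: "X \<in> tcarrier m" unfolding X_def using p0 p_def m0 by (intro T_monom) simp
  have key: "g * pderiv (X * u) - (X * u) * pderiv g = X * (g * pderiv u - u * pderiv g)" for g u
    by (simp add: pderiv_mult pX algebra_simps)
  show ?thesis
  proof (rule bad_ideal[OF R m0, of J X 1])
    show "J \<subseteq> tcarrier m" unfolding J_def by blast
    show "0 \<in> J" unfolding J_def using T_0[OF m0] by simp
    show "\<And>g h. g \<in> J \<Longrightarrow> h \<in> J \<Longrightarrow> g + h \<in> J" unfolding J_def by (auto simp: T_add)
    show "\<And>c h. h \<in> J \<Longrightarrow> smult c h \<in> J" unfolding J_def by (auto simp: dvd_smult T_smult)
    show "pb m g h \<in> J" if gh: "g \<in> tcarrier m" "h \<in> J" for g h
    proof -
      obtain u where u: "h = X * u" using gh(2) unfolding J_def by (auto elim: dvdE)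
      have "X dvd pb m g h" unfolding pb_def u key by (rule dvd_mod) (simp_all add: Xdvd)
      thus ?thesis unfolding J_def using mod_in_T[OF m0] by (simp add: pb_def)
    qed
    show "pb m g h = 0" if gh: "g \<in> J" "h \<in> J" for g h
    proof -
      obtain u where u: "h = X * u" using gh(2) unfolding J_def by (auto elim: dvdE)
      obtain v where v: "g = X * v" using gh(1) unfolding J_def by (auto elim: dvdE)
      have "g * pderiv h - h * pderiv g = (X * X) * (v * pderiv u - u * pderiv v)"
        unfolding u v by (simp add: pderiv_mult pX algebra_simps)
      hence "xm m dvd (g * pderiv h - h * pderiv g)" using XX by simp
      thus ?thesis unfolding pb_def by (rule dvd_imp_mod_0)
    qed
    show "X \<in> J" unfolding J_def using XT by simp
    show "X \<noteq> 0" unfolding X_def by simp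
    show "1 \<in> tcarrier m" by (rule T_1[OF m0])
    show "1 \<notin> J"
    proof
      assume "1 \<in> J"
      hence "X dvd 1" unfolding J_def by simp
      hence "degree X \<le> degree (1::'k poly)" by (rule dvd_imp_degree_le) simp
      moreover have "degree X = m - p" unfolding X_def by (simp add: degree_monom_eq)
      ultimately show False using mge p0 p_def by simp
    qed
  qed
qed

lemma caseB:
  fixes L :: "('k::field, 'a) lie_alg"
  assumes R: "rep 2 L \<phi>"
  shows "\<not> lsimple L \<and> \<not> lsemisimple L"
proof -
  have m0: "(2::nat) > 0" by simp
  define J :: "'k poly set" where "J = {h \<in> tcarrier 2. degree h = 0}"
  have pc: "pderiv h = 0" if "degree h = 0" for h :: "'k poly"
  proof -
    have "h = [:coeff h 0:]" using that by (metis degree_0_id)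
    thus ?thesis by (metis pderiv_pCons pderiv_0 add_0 pCons_0_0)
  qed
  show ?thesis
  proof (rule bad_ideal[OF R m0, of J 1 "[:0,1:]"])
    show "J \<subseteq> tcarrier 2" unfolding J_def by blast
    show "0 \<in> J" unfolding J_def using T_0[OF m0] by simp
    show "g + h \<in> J" if "g \<in> J" "h \<in> J" for g h
      using that degree_add_le[of g 0 h] unfolding J_def by (auto simp: T_add)
    show "smult c h \<in> J" if "h \<in> J" for c h
      using that unfolding J_def by (auto simp: T_smult)
    show "pb 2 g h \<in> J" if "g \<in> tcarrier 2" "h \<in> J" for g h
    proof -
      have dh: "degree h = 0" using that(2) unfolding J_def by simp
      have dg: "degree (pderiv g) = 0" using degree_pderiv_le1[of g] that(1) by (simp add: tcarrier_def)
      have d: "degree (h * pderiv g) = 0" using degree_mult_le[of h "pderiv g"] dh dg by simp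
      hence "(h * pderiv g) \<in> tcarrier 2" by (simp add: tcarrier_def)
      hence "pb 2 g h = - (h * pderiv g)" unfolding pb_def using pc[OF dh]
        by (simp add: poly_mod_minus_left mod_T)
      thus ?thesis unfolding J_def using d mod_in_T[OF m0] by (simp add: pb_def tcarrier_def)
    qed
    show "pb 2 g h = 0" if "g \<in> J" "h \<in> J" for g h
      using that pc unfolding J_def pb_def by simp
    show "1 \<in> J" unfolding J_def using T_1[OF m0] by simp
    show "(1::'k poly) \<noteq> 0" by simp
    show "[:0,1:] \<in> tcarrier 2" by (rule T_x) simp
    show "[:0,1::'k:] \<notin> J" unfolding J_def by simp
  qed
qed

theorem proposition3p3:
  fixes m :: nat
  assumes "CHAR('k::alg_closed_field) > 0"
    and "m \<ge> 2"
    and "CHAR('k) dvd m"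
  shows "(lsimple (HH1 m :: ('k, _) lie_alg) \<longleftrightarrow> lsemisimple (HH1 m :: ('k, _) lie_alg))
       \<and> (lsemisimple (HH1 m :: ('k, _) lie_alg) \<longleftrightarrow> (m = CHAR('k) \<and> CHAR('k) > 2))
       \<and> ((m = CHAR('k) \<and> CHAR('k) > 2) \<longleftrightarrow>
            (lie_isomorphic (HH1 m :: ('k, _) lie_alg) (Witt11 :: ('k, _) lie_alg) \<and> CHAR('k) > 2))"
proof -
  define p where "p = CHAR('k)"
  have pp: "prime p" unfolding p_def by (rule prime_CHAR_semidom[OF assms(1)])
  hence p2: "p \<ge> 2" by (rule prime_ge_2_nat)
  have m1: "m > 1" using assms(2) by simp
  have m0: "m > 0" using assms(2) by simp
  have RH: "rep m (HH1 m :: ('k, _) lie_alg) (\<lambda>h. {delta m h})" by (rule rep_HH1[OF assms(3) m1])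
  have pos: "lsimple (HH1 m :: ('k, _) lie_alg) \<and> lsemisimple (HH1 m :: ('k, _) lie_alg)"
    if "m = p \<and> p > 2"
  proof -
    have chm: "CHAR('k) = m" using that p_def by simp
    have m2: "m > 2" using that by simp
    show ?thesis using simple[OF RH chm m2] semisimple[OF RH chm m2] by simp
  qed
  have neg: "\<not> lsimple (HH1 m :: ('k, _) lie_alg) \<and> \<not> lsemisimple (HH1 m :: ('k, _) lie_alg)"
    if "\<not> (m = p \<and> p > 2)"
  proof (cases "m = p")
    case True
    hence "m = 2" using that p2 by simp
    thus ?thesis using caseB RH by blast
  next
    case False
    obtain t where t: "m = p * t" using assms(3) p_def by (auto elim: dvdE)
    have "t \<noteq> 0" using t m0 by (cases "t = 0") auto
    moreover have "t \<noteq> 1" using t False by auto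
    ultimately have "t \<ge> 2" by simp
    hence "m \<ge> 2 * p" using t by simp
    thus ?thesis using caseA[OF RH assms(3) assms(1)] p_def by simp
  qed
  have iso1: "lie_isomorphic (HH1 m :: ('k, _) lie_alg) (Witt11 :: ('k, _) lie_alg)" if "m = p \<and> p > 2"
  proof -
    have chm: "CHAR('k) = m" using that p_def by simp
    have RW: "rep m (Der_lie m :: ('k, _) lie_alg) (delta m)" by (rule rep_Der[OF assms(3) m1])
    show ?thesis unfolding lie_isomorphic_def Witt11_def chm using rep_iso[OF RH RW m0] by blast
  qed
  have iso2: "m = p" if hyp: "lie_isomorphic (HH1 m :: ('k, _) lie_alg) (Witt11 :: ('k, _) lie_alg)" "p > 2"
  proof (rule ccontr)
    assume ne: "m \<noteq> p"
    obtain f where f: "lie_iso (HH1 m :: ('k, _) lie_alg) (Der_lie p :: ('k, _) lie_alg) f"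
      using hyp(1) unfolding lie_isomorphic_def Witt11_def p_def by blast
    have RW: "rep p (Der_lie p :: ('k, _) lie_alg) (delta p)"
      by (rule rep_Der) (use p2 p_def in auto)
    have sW: "lsimple (Der_lie p :: ('k, _) lie_alg)"
      by (rule simple[OF RW]) (use hyp(2) p_def in auto)
    have z: "f (lzero (HH1 m :: ('k, _) lie_alg)) = lzero (Der_lie p :: ('k, _) lie_alg)"
      by (rule iso_zero[OF f RH RW m0]) (use p2 in simp)
    have zc: "lzero (HH1 m :: ('k, _) lie_alg) \<in> lcarrier (HH1 m :: ('k, _) lie_alg)"
      using R_zero[OF RH m0] R_in[OF RH m0 T_0[OF m0]] by simp
    have "lsimple (HH1 m :: ('k, _) lie_alg)" by (rule iso_simple[OF f z zc sW])
    thus False using neg ne by blast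
  qed
  show ?thesis unfolding p_def[symmetric] using pos neg iso1 iso2 by blast
qed

end
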